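(* Let $f_1,\dots,f_n$ be monotone non-identical linear functions. If a counterclockwise permutation $\sigma$ for them satisfies $f^\sigma\le f^{\sigma_1}$, $f^\sigma\le f^{\sigma_{n-1}}$ and $\theta(f_{\sigma(1)})\ne\theta(f^\sigma)$, then $\sigma$ is minimum.
   Context: A linear function is $f(x)=ax+b$; monotone means $a>0$; identical means $f(x)=x$. $\vec f=(b,1-a)^\top$ and $\theta(f)\in[0,2\pi)$ is its polar angle ($\bot$ if $\vec f=0$). For a permutation $\sigma$ of $[n]$, $f^\sigma=f_{\sigma(n)}\circ\cdots\circ f_{\sigma(1)}$; $\sigma$ is minimum if $f^\sigma\le f^\rho$ pointwise for all permutations $\rho$. $\sigma$ is counterclockwise if there is $k$ with $\theta(f_{\sigma(k)})\le\cdots\le\theta(f_{\sigma(n)})\le\theta(f_{\sigma(1)})\le\cdots\le\theta(f_{\sigma(k-1)})$. The $k$-shift is $\sigma_k(i)=\sigma(i+k)$ for $i\le n-k$, $\sigma_k(i)=\sigma(i+k-n)$ otherwise. *)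

theory Defs
  imports "HOL-Analysis.Analysis" "HOL-Combinatorics.Permutations"
begin

type_synonym linfun = "real \<times> real"

definition lapp :: "linfun \<Rightarrow> real \<Rightarrow> real" where
  "lapp f x = fst f * x + snd f"

definition lcomp :: "linfun \<Rightarrow> linfun \<Rightarrow> linfun" where
  "lcomp g f = (fst g * fst f, fst g * snd f + snd g)"

definition monotone_lin :: "linfun \<Rightarrow> bool" where
  "monotone_lin f \<longleftrightarrow> fst f > 0"

definition identical_lin :: "linfun \<Rightarrow> bool" where
  "identical_lin f \<longleftrightarrow> f = (1, 0)"

definition lvec :: "linfun \<Rightarrow> complex" where
  "lvec f = Complex (snd f) (1 - fst f)"

definition polar_angle :: "complex \<Rightarrow> real" where
  "polar_angle z = (if Arg z < 0 then Arg z + 2 * pi else Arg z)"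

text \<open>theta f; None plays the role of bottom (when the vector is 0).\<close>
definition theta :: "linfun \<Rightarrow> real option" where
  "theta f = (if lvec f = 0 then None else Some (polar_angle (lvec f)))"

text \<open>f^sigma = f_{sigma(n)} \<circ> ... \<circ> f_{sigma(1)} (identity for n = 0).\<close>
fun compose_perm :: "(nat \<Rightarrow> linfun) \<Rightarrow> (nat \<Rightarrow> nat) \<Rightarrow> nat \<Rightarrow> linfun" where
  "compose_perm f \<sigma> 0 = (1, 0)"
| "compose_perm f \<sigma> (Suc k) = lcomp (f (\<sigma> (Suc k))) (compose_perm f \<sigma> k)"

text \<open>In the counterclockwise condition all f_i are non-identical, so theta is the real polar angle.\<close>

definition kshift :: "nat \<Rightarrow> (nat \<Rightarrow> nat) \<Rightarrow> nat \<Rightarrow> nat \<Rightarrow> nat" where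
  "kshift n \<sigma> k i = (if i \<le> n - k then \<sigma> (i + k) else \<sigma> (i + k - n))"

definition counterclockwise :: "nat \<Rightarrow> (nat \<Rightarrow> linfun) \<Rightarrow> (nat \<Rightarrow> nat) \<Rightarrow> bool" where
  "counterclockwise n f \<sigma> \<longleftrightarrow>
     (\<exists>k\<in>{1..n}. \<forall>i j. 1 \<le> i \<longrightarrow> i \<le> j \<longrightarrow> j \<le> n \<longrightarrow>
        polar_angle (lvec (f (kshift n \<sigma> (k - 1) i))) \<le> polar_angle (lvec (f (kshift n \<sigma> (k - 1) j))))"

definition lin_le :: "linfun \<Rightarrow> linfun \<Rightarrow> bool" where
  "lin_le g h \<longleftrightarrow> (\<forall>x. lapp g x \<le> lapp h x)"

definition minimum_perm :: "nat \<Rightarrow> (nat \<Rightarrow> linfun) \<Rightarrow> (nat \<Rightarrow> nat) \<Rightarrow> bool" where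
  "minimum_perm n f \<sigma> \<longleftrightarrow>
     (\<forall>\<rho>. \<rho> permutes {1..n} \<longrightarrow> lin_le (compose_perm f \<sigma> n) (compose_perm f \<rho> n))"

end

theory Submission
  imports Defs
begin

definition cmp :: "(nat \<Rightarrow> linfun) \<Rightarrow> nat list \<Rightarrow> linfun" where
  "cmp f xs = foldl (\<lambda>acc i. lcomp (f i) acc) (1,0) xs"

definition vcross :: "complex \<Rightarrow> complex \<Rightarrow> real" where
  "vcross z w = Re z * Im w - Im z * Re w"

abbreviation WW :: "(nat \<Rightarrow> linfun) \<Rightarrow> nat list \<Rightarrow> complex" where
  "WW f xs \<equiv> lvec (cmp f xs)"

lemma lcomp_assoc: "lcomp (lcomp a b) c = lcomp a (lcomp b c)"
  by (simp add: lcomp_def algebra_simps)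

lemma lcomp_id_left[simp]: "lcomp (1,0) c = c" by (simp add: lcomp_def)
lemma lcomp_id_right[simp]: "lcomp c (1,0) = c" by (simp add: lcomp_def)

lemma foldl_comp: "foldl (\<lambda>acc i. lcomp (f i) acc) c xs = lcomp (cmp f xs) c"
proof (induction xs arbitrary: c)
  case Nil then show ?case by (simp add: cmp_def)
next
  case (Cons x xs)
  have "cmp f (x#xs) = lcomp (cmp f xs) (f x)"
    using Cons[of "lcomp (f x) (1,0)"] by (simp add: cmp_def)
  then show ?case using Cons[of "lcomp (f x) c"] by (simp add: lcomp_assoc)
qed

lemma comp_Nil[simp]: "cmp f [] = (1,0)" by (simp add: cmp_def)

lemma comp_append: "cmp f (xs @ ys) = lcomp (cmp f ys) (cmp f xs)"
proof -
  have "cmp f (xs@ys) = foldl (\<lambda>acc i. lcomp (f i) acc) (cmp f xs) ys" by (simp add: cmp_def)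
  then show ?thesis by (simp only: foldl_comp)
qed

lemma comp_single[simp]: "cmp f [x] = f x" by (simp add: cmp_def)

lemma comp_snoc: "cmp f (xs @ [x]) = lcomp (f x) (cmp f xs)"
  by (simp only: comp_append comp_single)

lemma comp_Cons: "cmp f (x # xs) = lcomp (cmp f xs) (f x)"
proof -
  have "cmp f (x#xs) = cmp f ([x]@xs)" by simp
  also have "\<dots> = lcomp (cmp f xs) (cmp f [x])" by (rule comp_append)
  finally show ?thesis by simp
qed

lemma lvec_lcomp: "lvec (lcomp g h) = lvec g + of_real (fst g) * lvec h"
  by (simp add: lvec_def lcomp_def complex_eq_iff algebra_simps)

lemma snd_lcomp_swap: "snd (lcomp g h) - snd (lcomp h g) = vcross (lvec g) (lvec h)"
  by (simp add: lcomp_def vcross_def lvec_def algebra_simps)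

lemma WW_append: "WW f (xs @ ys) = WW f ys + of_real (fst (cmp f ys)) * WW f xs"
  by (simp add: comp_append lvec_lcomp)

lemma B_swap: "snd (cmp f (xs @ ys)) - snd (cmp f (ys @ xs)) = vcross (WW f ys) (WW f xs)"
  by (simp add: comp_append snd_lcomp_swap)

lemma fst_comp: "fst (cmp f xs) = prod_list (map (\<lambda>i. fst (f i)) xs)"
proof (induction xs rule: rev_induct)
  case Nil then show ?case by simp
next
  case (snoc x xs)
  have "fst (cmp f (xs @ [x])) = fst (f x) * fst (cmp f xs)" unfolding comp_snoc lcomp_def by simp
  then show ?case using snoc by (simp add: mult.commute)
qed

lemma fst_comp_pos: "(\<And>i. i \<in> set xs \<Longrightarrow> fst (f i) > 0) \<Longrightarrow> fst (cmp f xs) > 0"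
  unfolding fst_comp by (induction xs) auto

lemma fst_comp_perm: "mset xs = mset ys \<Longrightarrow> fst (cmp f xs) = fst (cmp f ys)"
  unfolding fst_comp by (metis mset_map prod_mset_prod_list)

lemma snd_comp_append_left: "fst (cmp f ys) = fst (cmp f zs) \<Longrightarrow>
   snd (cmp f (xs @ ys)) - snd (cmp f (xs @ zs)) = snd (cmp f ys) - snd (cmp f zs)"
  by (simp add: comp_append lcomp_def algebra_simps)

lemma snd_comp_snoc: "snd (cmp f (xs @ [x])) = fst (f x) * snd (cmp f xs) + snd (f x)"
  by (simp add: comp_snoc lcomp_def)

lemma vcross_antisym: "vcross z w = - vcross w z" by (simp add: vcross_def)
lemma vcross_add_right: "vcross z (w + u) = vcross z w + vcross z u" by (simp add: vcross_def algebra_simps)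
lemma vcross_add_left: "vcross (w + u) z = vcross w z + vcross u z" by (simp add: vcross_def algebra_simps)
lemma vcross_scale_right: "vcross z (of_real c * w) = c * vcross z w" by (simp add: vcross_def algebra_simps)
lemma vcross_scale_left: "vcross (of_real c * w) z = c * vcross w z" by (simp add: vcross_def algebra_simps)
lemma vcross_self[simp]: "vcross z z = 0" by (simp add: vcross_def)
lemma vcross_zero[simp]: "vcross z 0 = 0" "vcross 0 z = 0" by (simp_all add: vcross_def)

lemma lvec_id[simp]: "lvec (1,0) = 0" by (simp add: lvec_def complex_eq_iff)

lemma sign_right:
  assumes "\<And>x. x \<in> set xs \<Longrightarrow> fst (f x) > 0"
    and "\<And>x. x \<in> set xs \<Longrightarrow> vcross u (lvec (f x)) \<ge> 0"
  shows "vcross u (WW f xs) \<ge> 0"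
  using assms
proof (induction xs rule: rev_induct)
  case Nil then show ?case by simp
next
  case (snoc x xs)
  have "WW f (xs @ [x]) = lvec (f x) + of_real (fst (f x)) * WW f xs"
    by (simp add: comp_snoc lvec_lcomp)
  have "vcross u (WW f xs) \<ge> 0" using snoc by auto
  moreover have "fst (f x) > 0" "vcross u (lvec (f x)) \<ge> 0" using snoc by auto
  ultimately show ?case unfolding \<open>WW f (xs @ [x]) = _\<close> vcross_add_right vcross_scale_right
    by simp
qed

lemma sign_left:
  assumes "\<And>x. x \<in> set xs \<Longrightarrow> fst (f x) > 0"
    and "\<And>x. x \<in> set xs \<Longrightarrow> vcross (lvec (f x)) u \<ge> 0"
  shows "vcross (WW f xs) u \<ge> 0"
proof -
  have "vcross (-u) (WW f xs) \<ge> 0"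
    apply (rule sign_right) using assms by (auto simp: vcross_def algebra_simps)
  then show ?thesis by (simp add: vcross_def mult.commute)
qed

lemma vcross_rcis: "vcross (rcis r a) (rcis s b) = r * s * sin (b - a)"
  by (simp add: vcross_def rcis_def cis.ctr sin_diff algebra_simps)

lemma polar_range: "0 \<le> polar_angle z \<and> polar_angle z < 2 * pi"
  using Arg_bounded[of z] by (auto simp: polar_angle_def)

lemma rcis_2pi: "rcis r (a + 2 * pi) = rcis r a"
  by (simp add: rcis_def cis_mult[symmetric] )

lemma rcis_polar: "rcis (cmod z) (polar_angle z) = z"
  by (simp add: polar_angle_def rcis_2pi rcis_cmod_Arg)

lemma unwrap:
  assumes "distinct xs" "sorted (map p (rotate k xs))" "\<And>x. x \<in> set xs \<Longrightarrow> 0 \<le> p x \<and> p x < 2 * pi"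
  shows "\<exists>\<psi>. (\<forall>x\<in>set xs. \<psi> x = p x \<or> \<psi> x = p x + 2 * pi) \<and> sorted (map \<psi> xs)
          \<and> (xs \<noteq> [] \<longrightarrow> \<psi> (last xs) \<le> \<psi> (hd xs) + 2 * pi)"
proof -
  define k' where "k' = k mod length xs"
  define A where "A = take k' xs"
  define B where "B = drop k' xs"
  have xsAB: "xs = A @ B" by (simp add: A_def B_def)
  have rot: "rotate k xs = B @ A" by (simp add: A_def B_def k'_def rotate_drop_take)
  have disj: "set A \<inter> set B = {}" using assms(1) xsAB by (metis distinct_append)
  define \<psi> where "\<psi> x = (if x \<in> set B then p x + 2 * pi else p x)" for x
  have sBA: "sorted (map p B @ map p A)" using assms(2) rot by simp
  have mA: "map \<psi> A = map p A" using disj by (auto simp: \<psi>_def)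
  have mB: "map \<psi> B = map (\<lambda>x. p x + 2 * pi) B" by (auto simp: \<psi>_def)
  have sA: "sorted (map p A)" using sBA by (simp add: sorted_append)
  have sB: "sorted (map p B)" using sBA by (simp add: sorted_append)
  have sB2: "sorted (map (\<lambda>x. p x + 2 * pi) B)"
    using sB by (simp add: sorted_iff_nth_mono)
  have cross: "\<forall>a\<in>set A. \<forall>b\<in>set B. p a \<le> p b + 2 * pi"
  proof (intro ballI)
    fix a b assume "a \<in> set A" "b \<in> set B"
    then have "a \<in> set xs" "b \<in> set xs" using xsAB by auto
    then show "p a \<le> p b + 2 * pi" using assms(3)[of a] assms(3)[of b] by linarith
  qed
  have sorted: "sorted (map \<psi> xs)"
    unfolding xsAB map_append mA mB sorted_append using sA sB2 cross by auto
  have BA: "\<forall>a\<in>set A. \<forall>b\<in>set B. p b \<le> p a" using sBA by (simp add: sorted_append)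
  have last: "xs \<noteq> [] \<longrightarrow> \<psi> (last xs) \<le> \<psi> (hd xs) + 2 * pi"
  proof
    assume ne: "xs \<noteq> []"
    show "\<psi> (last xs) \<le> \<psi> (hd xs) + 2 * pi"
    proof (cases "A = []")
      case True
      then have "xs = B" "B \<noteq> []" using xsAB ne by auto
      then show ?thesis using assms(3)[of "last xs"] assms(3)[of "hd xs"] by (auto simp: \<psi>_def)
    next
      case Ane: False
      then have hdA: "hd xs = hd A" "hd A \<in> set A" using xsAB by auto
      show ?thesis
      proof (cases "B = []")
        case True
        then have "xs = A" using xsAB by simp
        then show ?thesis using assms(3)[of "last xs"] assms(3)[of "hd xs"] ne disj hdA True
          by (auto simp: \<psi>_def)
      next
        case False
        then have "last xs = last B" "last B \<in> set B" using xsAB by auto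
        then show ?thesis using hdA BA disj by (auto simp: \<psi>_def)
      qed
    qed
  qed
  show ?thesis
    apply (rule exI[of _ \<psi>]) using sorted last by (auto simp: \<psi>_def)
qed

lemma vcross_nonneg_ang:
  assumes "0 \<le> b - a" "b - a \<le> pi" "r \<ge> 0" "s \<ge> 0"
  shows "vcross (rcis r a) (rcis s b) \<ge> 0"
  unfolding vcross_rcis using assms sin_ge_zero[of "b - a"] by simp

lemma phi_exists:
  assumes v1: "v1 = rcis r1 \<psi>1" and r1: "r1 > 0"
    and psi1: "\<psi>1 = polar_angle v1 \<or> \<psi>1 = polar_angle v1 + 2 * pi"
    and V: "V \<noteq> 0" and ne: "polar_angle v1 \<noteq> polar_angle V" and cr: "vcross v1 V \<ge> 0"
  shows "\<exists>\<phi>. V = rcis (cmod V) \<phi> \<and> \<psi>1 < \<phi> \<and> \<phi> \<le> \<psi>1 + pi"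
proof -
  define \<alpha> where "\<alpha> = polar_angle V"
  define \<beta> where "\<beta> = polar_angle v1"
  define d where "d = \<alpha> - \<psi>1"
  define d' where "d' = (if d > 0 then d else if d > - 2 * pi then d + 2 * pi else d + 4 * pi)"
  have ra: "0 \<le> \<alpha>" "\<alpha> < 2 * pi" using polar_range[of V] by (auto simp: \<alpha>_def)
  have rb: "0 \<le> \<beta>" "\<beta> < 2 * pi" using polar_range[of v1] by (auto simp: \<beta>_def)
  have "\<alpha> \<noteq> \<beta>" using ne by (simp add: \<alpha>_def \<beta>_def)
  then have d'r: "0 < d'" "d' < 2 * pi"
    using psi1 ra rb unfolding d'_def d_def \<alpha>_def[symmetric] \<beta>_def[symmetric] by auto
  define \<phi> where "\<phi> = \<psi>1 + d'"
  have Vrep: "V = rcis (cmod V) \<alpha>" by (simp add: \<alpha>_def rcis_polar)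
  have "rcis (cmod V) \<phi> = rcis (cmod V) \<alpha>"
  proof -
    have "\<phi> = \<alpha> \<or> \<phi> = \<alpha> + 2 * pi \<or> \<phi> = (\<alpha> + 2 * pi) + 2 * pi"
      unfolding \<phi>_def d'_def d_def by auto
    then show ?thesis using rcis_2pi by metis
  qed
  then have Vphi: "V = rcis (cmod V) \<phi>" using Vrep by simp
  have "vcross v1 V = r1 * cmod V * sin d'"
    by (subst Vphi, simp add: v1 vcross_rcis \<phi>_def)
  moreover have "cmod V > 0" using V by simp
  ultimately have "sin d' \<ge> 0" using cr r1
    by (metis mult_pos_pos zero_le_mult_iff linorder_not_le)
  then have "d' \<le> pi" using sin_lt_zero[of d'] d'r by force
  then show ?thesis using Vphi d'r by (intro exI[of _ \<phi>]) (auto simp: \<phi>_def)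
qed

lemma last_bound:
  assumes "V = rcis rV \<phi>" "rV > 0" "vm = rcis rm \<psi>m" "rm > 0" "vcross V vm \<ge> 0"
    "\<psi>1 < \<phi>" "\<phi> \<le> \<psi>1 + pi" "\<psi>1 \<le> \<psi>m" "\<psi>m \<le> \<psi>1 + 2 * pi"
  shows "\<psi>m \<le> \<phi> + pi"
proof (rule ccontr)
  assume "\<not> ?thesis"
  then have "sin (\<psi>m - \<phi>) < 0" using sin_lt_zero[of "\<psi>m - \<phi>"] assms by auto
  moreover have "vcross V vm = rV * rm * sin (\<psi>m - \<phi>)" using assms by (simp add: vcross_rcis)
  ultimately have "vcross V vm < 0" using assms by (simp add: mult_pos_neg)
  then show False using assms by simp
qed

definition dirok :: "(nat \<Rightarrow> linfun) \<Rightarrow> (nat \<Rightarrow> real) \<Rightarrow> nat list \<Rightarrow> bool" where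
  "dirok f \<psi> Z \<longleftrightarrow> (\<forall>x\<in>set Z. lvec (f x) = rcis (cmod (lvec (f x))) (\<psi> x) \<and> lvec (f x) \<noteq> 0
      \<and> fst (f x) > 0 \<and> (\<psi> x = polar_angle (lvec (f x)) \<or> \<psi> x = polar_angle (lvec (f x)) + 2 * pi))"

lemma sorted_hd_last:
  assumes "sorted (map \<psi> Z)" "x \<in> set Z"
  shows "\<psi> (hd Z) \<le> \<psi> x \<and> \<psi> x \<le> \<psi> (last Z)"
proof -
  have Z: "Z = hd Z # tl Z" using assms(2) by (cases Z) auto
  have "\<psi> (hd Z) \<le> \<psi> x"
    using assms Z by (metis list.set_cases list.simps(9) set_ConsD sorted_simps(2) order_refl set_map image_eqI)
  moreover have Z2: "Z = butlast Z @ [last Z]" using assms(2) by (metis append_butlast_last_id empty_iff list.set(1))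
  have "\<psi> x \<le> \<psi> (last Z)"
  proof -
    have "sorted (map \<psi> (butlast Z) @ [\<psi> (last Z)])" using assms(1) Z2 by (metis map_append list.simps(8,9))
    then have "\<forall>y\<in>set (butlast Z). \<psi> y \<le> \<psi> (last Z)" by (auto simp: sorted_append)
    then show ?thesis using assms(2) Z2 by (metis in_set_butlast_appendI order_refl rotate1.simps(2) set_rotate1 set_ConsD)
  qed
  ultimately show ?thesis by simp
qed

lemma frame:
  assumes ne: "Z \<noteq> []" and so: "sorted (map \<psi> Z)" and sp: "\<psi> (last Z) \<le> \<psi> (hd Z) + 2 * pi"
    and d: "dirok f \<psi> Z" and V: "V \<noteq> 0"
    and pa: "polar_angle (lvec (f (hd Z))) \<noteq> polar_angle V"
    and c1: "vcross (lvec (f (hd Z))) V \<ge> 0" and c2: "vcross V (lvec (f (last Z))) \<ge> 0"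
  shows "\<exists>\<phi>. V = rcis (cmod V) \<phi> \<and> \<psi> (hd Z) < \<phi> \<and> \<phi> \<le> \<psi> (hd Z) + pi \<and> \<psi> (last Z) \<le> \<phi> + pi"
proof -
  have h: "hd Z \<in> set Z" "last Z \<in> set Z" using ne by auto
  have dh: "lvec (f (hd Z)) = rcis (cmod (lvec (f (hd Z)))) (\<psi> (hd Z))" "lvec (f (hd Z)) \<noteq> 0"
     "\<psi> (hd Z) = polar_angle (lvec (f (hd Z))) \<or> \<psi> (hd Z) = polar_angle (lvec (f (hd Z))) + 2 * pi"
    using d h by (auto simp: dirok_def)
  have dl: "lvec (f (last Z)) = rcis (cmod (lvec (f (last Z)))) (\<psi> (last Z))" "lvec (f (last Z)) \<noteq> 0"
    using d h by (auto simp: dirok_def)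
  obtain \<phi> where phi: "V = rcis (cmod V) \<phi>" "\<psi> (hd Z) < \<phi>" "\<phi> \<le> \<psi> (hd Z) + pi"
    using phi_exists[OF dh(1) _ dh(3) V pa c1] dh(2) by auto
  have "\<psi> (last Z) \<le> \<phi> + pi"
    apply (rule last_bound[OF phi(1) _ dl(1) _ c2 phi(2) phi(3)])
    using V dl(2) sorted_hd_last[OF so h(2)] sp by auto
  then show ?thesis using phi by blast
qed

lemma dir_of:
  assumes "dirok f \<psi> Z" "x \<in> set Z"
  shows "lvec (f x) = rcis (cmod (lvec (f x))) (\<psi> x)" "fst (f x) > 0"
  using assms by (auto simp: dirok_def)

lemma core_B:
  assumes Z: "Z = P @ S" and ne: "Z \<noteq> []" and so: "sorted (map \<psi> Z)"
    and sp: "\<psi> (last Z) \<le> \<psi> (hd Z) + 2 * pi" and d: "dirok f \<psi> Z"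
    and c1: "vcross (lvec (f (hd Z))) (WW f Z) \<ge> 0" and c2: "vcross (WW f Z) (lvec (f (last Z))) \<ge> 0"
    and ang: "WW f Z = 0 \<or> polar_angle (lvec (f (hd Z))) \<noteq> polar_angle (WW f Z)"
  shows "vcross (WW f P) (WW f S) \<ge> 0"
proof -
  define V where "V = WW f Z"
  define AS where "AS = fst (cmp f S)"
  have AS: "AS > 0" unfolding AS_def using d Z by (intro fst_comp_pos) (auto simp: dirok_def)
  have VPS: "V = WW f S + of_real AS * WW f P" by (simp add: V_def Z WW_append AS_def)
  have id1: "vcross (WW f P) V = vcross (WW f P) (WW f S)"
    by (simp add: VPS vcross_add_right vcross_scale_right)
  have id2: "vcross V (WW f S) = AS * vcross (WW f P) (WW f S)"
    by (simp add: VPS vcross_add_left vcross_scale_left)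
  show ?thesis
  proof (cases "V = 0")
    case True then show ?thesis using id1 by simp
  next
    case False
    obtain \<phi> where phi: "V = rcis (cmod V) \<phi>" "\<psi> (hd Z) < \<phi>" "\<phi> \<le> \<psi> (hd Z) + pi" "\<psi> (last Z) \<le> \<phi> + pi"
      using frame[OF ne so sp d False] ang c1 c2 False by (auto simp: V_def)
    show ?thesis
    proof (cases "\<forall>p\<in>set P. \<psi> p \<le> \<phi>")
      case True
      have "vcross (WW f P) V \<ge> 0"
      proof (rule sign_left)
        fix x assume x: "x \<in> set P"
        then have xZ: "x \<in> set Z" using Z by auto
        show "fst (f x) > 0" using dir_of[OF d xZ] by simp
        have b: "\<psi> (hd Z) \<le> \<psi> x" using sorted_hd_last[OF so xZ] by simp
        show "vcross (lvec (f x)) V \<ge> 0"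
          apply (subst dir_of(1)[OF d xZ], subst phi(1))
          apply (rule vcross_nonneg_ang) using True x b phi by auto
      qed
      then show ?thesis using id1 by simp
    next
      case False
      then obtain p where p: "p \<in> set P" "\<psi> p > \<phi>" by force
      have "vcross V (WW f S) \<ge> 0"
      proof (rule sign_right)
        fix x assume x: "x \<in> set S"
        then have xZ: "x \<in> set Z" using Z by auto
        show "fst (f x) > 0" using dir_of[OF d xZ] by simp
        have "\<psi> p \<le> \<psi> x" using so Z p(1) x by (auto simp: sorted_append)
        moreover have "\<psi> x \<le> \<psi> (last Z)" using sorted_hd_last[OF so xZ] by simp
        ultimately show "vcross V (lvec (f x)) \<ge> 0"
          apply (subst dir_of(1)[OF d xZ], subst phi(1))
          apply (rule vcross_nonneg_ang) using p phi by auto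
      qed
      then show ?thesis using id2 AS by (simp add: zero_le_mult_iff)
    qed
  qed
qed

lemma core_K:
  assumes Z: "Z = G @ e # H" and Gne: "G \<noteq> []" and Hne: "H \<noteq> []" and so: "sorted (map \<psi> Z)"
    and sp: "\<psi> (last Z) \<le> \<psi> (hd Z) + 2 * pi" and d: "dirok f \<psi> Z"
    and c1: "vcross (lvec (f (hd Z))) (WW f (G @ H)) \<ge> 0"
    and c2: "vcross (WW f (G @ H)) (lvec (f (last Z))) \<ge> 0"
    and ang: "WW f (G @ H) = 0 \<or> polar_angle (lvec (f (hd Z))) \<noteq> polar_angle (WW f (G @ H))"
  shows "vcross (lvec (f e)) (WW f H) \<ge> 0"
proof -
  have ne: "Z \<noteq> []" using Z by simp
  define V where "V = WW f (G @ H)"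
  define AH where "AH = fst (cmp f H)"
  have AH: "AH > 0" unfolding AH_def using d Z by (intro fst_comp_pos) (auto simp: dirok_def)
  have VGH: "V = WW f H + of_real AH * WW f G" by (simp add: V_def WW_append AH_def)
  have idK: "vcross (lvec (f e)) (WW f H) = vcross (lvec (f e)) V - AH * vcross (lvec (f e)) (WW f G)"
    by (simp add: VGH vcross_add_right vcross_scale_right)
  have eZ: "e \<in> set Z" using Z by simp
  have de: "lvec (f e) = rcis (cmod (lvec (f e))) (\<psi> e)" using dir_of[OF d eZ] by simp
  have so': "sorted (map \<psi> G @ \<psi> e # map \<psi> H)" using so Z by simp
  have Gle: "\<And>g. g \<in> set G \<Longrightarrow> \<psi> g \<le> \<psi> e" using so' by (auto simp: sorted_append)
  have Hge: "\<And>h. h \<in> set H \<Longrightarrow> \<psi> e \<le> \<psi> h" using so' by (auto simp: sorted_append)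
  have bnd: "\<And>x. x \<in> set Z \<Longrightarrow> \<psi> (hd Z) \<le> \<psi> x \<and> \<psi> x \<le> \<psi> (last Z)"
    using sorted_hd_last[OF so] by blast
  have Hpos: "vcross (lvec (f e)) (WW f H) \<ge> 0" if hyp: "\<And>h. h \<in> set H \<Longrightarrow> \<psi> h \<le> \<psi> e + pi"
  proof (rule sign_right)
    fix x assume x: "x \<in> set H"
    then have xZ: "x \<in> set Z" using Z by auto
    show "fst (f x) > 0" using dir_of[OF d xZ] by simp
    show "vcross (lvec (f e)) (lvec (f x)) \<ge> 0"
      apply (subst dir_of(1)[OF d xZ], subst de)
      apply (rule vcross_nonneg_ang) using hyp[OF x] Hge[OF x] by auto
  qed
  have Gneg: "vcross (lvec (f e)) (WW f G) \<le> 0" if hyp: "\<And>g. g \<in> set G \<Longrightarrow> \<psi> e - pi \<le> \<psi> g"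
  proof -
    have "vcross (WW f G) (lvec (f e)) \<ge> 0"
    proof (rule sign_left)
      fix x assume x: "x \<in> set G"
      then have xZ: "x \<in> set Z" using Z by auto
      show "fst (f x) > 0" using dir_of[OF d xZ] by simp
      show "vcross (lvec (f x)) (lvec (f e)) \<ge> 0"
        apply (subst dir_of(1)[OF d xZ], subst de)
        apply (rule vcross_nonneg_ang) using hyp[OF x] Gle[OF x] by auto
    qed
    then show ?thesis by (simp add: vcross_antisym[of "lvec (f e)"])
  qed
  show ?thesis
  proof (cases "V = 0")
    case True
    show ?thesis
    proof (cases "\<forall>h\<in>set H. \<psi> h \<le> \<psi> e + pi")
      case True then show ?thesis using Hpos by blast
    next
      case False
      then obtain h where h: "h \<in> set H" "\<psi> h > \<psi> e + pi" by force
      have hZ: "h \<in> set Z" using h Z by auto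
      have "\<And>g. g \<in> set G \<Longrightarrow> \<psi> e - pi \<le> \<psi> g"
      proof -
        fix g assume g: "g \<in> set G"
        then have gZ: "g \<in> set Z" using Z by auto
        show "\<psi> e - pi \<le> \<psi> g" using bnd[OF gZ] bnd[OF hZ] sp h by linarith
      qed
      then have "vcross (lvec (f e)) (WW f G) \<le> 0" by (rule Gneg)
      then show ?thesis using idK True AH by (simp add: mult_nonneg_nonpos)
    qed
  next
    case False
    obtain \<phi> where phi: "V = rcis (cmod V) \<phi>" "\<psi> (hd Z) < \<phi>" "\<phi> \<le> \<psi> (hd Z) + pi" "\<psi> (last Z) \<le> \<phi> + pi"
      using frame[OF ne so sp d False] ang c1 c2 False by (auto simp: V_def)
    show ?thesis
    proof (cases "\<psi> e \<ge> \<phi>")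
      case True
      have "\<And>h. h \<in> set H \<Longrightarrow> \<psi> h \<le> \<psi> e + pi"
      proof -
        fix h assume "h \<in> set H"
        then have "h \<in> set Z" using Z by auto
        then show "\<psi> h \<le> \<psi> e + pi" using bnd phi True by force
      qed
      then show ?thesis using Hpos by blast
    next
      case False
      have "\<And>g. g \<in> set G \<Longrightarrow> \<psi> e - pi \<le> \<psi> g"
      proof -
        fix g assume "g \<in> set G"
        then have "g \<in> set Z" using Z by auto
        then show "\<psi> e - pi \<le> \<psi> g" using bnd phi False by force
      qed
      then have g: "vcross (lvec (f e)) (WW f G) \<le> 0" by (rule Gneg)
      have "\<psi> (hd Z) \<le> \<psi> e" using bnd[OF eZ] by simp
      have v: "vcross (lvec (f e)) V \<ge> 0"
        apply (subst de, subst phi(1))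
        apply (rule vcross_nonneg_ang) using False phi \<open>\<psi> (hd Z) \<le> \<psi> e\<close> by auto
      have "AH * vcross (lvec (f e)) (WW f G) \<le> 0" using g AH by (simp add: mult_nonneg_nonpos)
      then show ?thesis using idK v by linarith
    qed
  qed
qed

definition pa :: "(nat \<Rightarrow> linfun) \<Rightarrow> nat \<Rightarrow> real" where
  "pa f x = polar_angle (lvec (f x))"

definition cyc :: "(nat \<Rightarrow> linfun) \<Rightarrow> nat list \<Rightarrow> bool" where
  "cyc f xs \<longleftrightarrow> (\<exists>k. sorted (map (pa f) (rotate k xs)))"

lemma mset_rotate: "mset (rotate k xs) = mset xs"
proof -
  have "mset xs = mset (take (k mod length xs) xs) + mset (drop (k mod length xs) xs)"
    by (metis append_take_drop_id mset_append)
  then show ?thesis by (simp add: rotate_drop_take add.commute)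
qed

lemma rotate_back: "\<exists>k'. rotate k' (rotate j xs) = rotate k xs"
proof (cases "xs = []")
  case True then show ?thesis by simp
next
  case False
  define n where "n = length xs"
  have n: "n > 0" using False by (simp add: n_def)
  define k' where "k' = k + (n - j mod n)"
  have "(k' + j) mod n = k mod n"
  proof -
    have "j mod n < n" using n by simp
    define q where "q = j div n"
    define r where "r = j mod n"
    have jd: "j = n * q + r" by (simp add: q_def r_def)
    have rn: "r < n" using \<open>j mod n < n\<close> by (simp add: r_def)
    have "k' + j = k + n * Suc q"
      unfolding k'_def r_def[symmetric] using jd rn by (simp add: algebra_simps)
    then show ?thesis by (metis mod_mult_self2)
  qed
  then have "rotate (k' + j) xs = rotate k xs" by (metis n_def rotate_conv_mod)
  then show ?thesis by (metis rotate_rotate)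
qed

lemma cyc_rotate: "cyc f xs \<Longrightarrow> cyc f (rotate j xs)"
  unfolding cyc_def by (metis rotate_back)

lemma filter_rotate: "\<exists>k'. filter P (rotate k xs) = rotate k' (filter P xs)"
proof -
  define m where "m = k mod length xs"
  have "filter P (rotate k xs) = filter P (drop m xs) @ filter P (take m xs)"
    by (simp add: rotate_drop_take m_def)
  moreover have "filter P xs = filter P (take m xs) @ filter P (drop m xs)"
    by (metis append_take_drop_id filter_append)
  ultimately show ?thesis by (metis rotate_append)
qed

lemma cyc_filter: "cyc f xs \<Longrightarrow> cyc f (filter P xs)"
  unfolding cyc_def by (metis filter_rotate sorted_filter)

lemma dirok_from_cyc:
  assumes "distinct xs" "cyc f xs" "\<And>x. x \<in> set xs \<Longrightarrow> fst (f x) > 0 \<and> lvec (f x) \<noteq> 0"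
  shows "\<exists>\<psi>. dirok f \<psi> xs \<and> sorted (map \<psi> xs) \<and> (xs \<noteq> [] \<longrightarrow> \<psi> (last xs) \<le> \<psi> (hd xs) + 2 * pi)"
proof -
  obtain k where k: "sorted (map (pa f) (rotate k xs))" using assms(2) by (auto simp: cyc_def)
  obtain \<psi> where psi: "\<forall>x\<in>set xs. \<psi> x = pa f x \<or> \<psi> x = pa f x + 2 * pi" "sorted (map \<psi> xs)"
      "xs \<noteq> [] \<longrightarrow> \<psi> (last xs) \<le> \<psi> (hd xs) + 2 * pi"
    using unwrap[OF assms(1) k, of] polar_range by (auto simp: pa_def)
  have "dirok f \<psi> xs"
    unfolding dirok_def
  proof (intro ballI conjI)
    fix x assume x: "x \<in> set xs"
    show "lvec (f x) = rcis (cmod (lvec (f x))) (\<psi> x)"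
      using psi(1) x rcis_polar rcis_2pi by (metis pa_def)
    show "lvec (f x) \<noteq> 0" "fst (f x) > 0" using assms(3)[OF x] by auto
    show "\<psi> x = polar_angle (lvec (f x)) \<or> \<psi> x = polar_angle (lvec (f x)) + 2 * pi"
      using psi(1) x by (simp add: pa_def)
  qed
  then show ?thesis using psi by blast
qed

lemma insert_rot:
  assumes "xs = A @ B" "xs' = A @ e # B"
  shows "\<exists>G H k''. rotate k xs = G @ H \<and> rotate k'' xs' = G @ e # H"
proof (cases "xs = []")
  case True
  then show ?thesis using assms by (intro exI[of _ "[]"] exI[of _ "[]"] exI[of _ 0]) auto
next
  case False
  define m where "m = k mod length xs"
  have m: "m < length xs" using False by (simp add: m_def)
  have rk: "rotate k xs = drop m xs @ take m xs" by (simp add: rotate_drop_take m_def)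
  show ?thesis
  proof (cases "m \<le> length A")
    case True
    have "rotate m xs' = drop m xs' @ take m xs'"
      using m True assms by (simp add: rotate_drop_take)
    moreover have "drop m xs' = drop m A @ e # B" "take m xs' = take m A"
      using True assms by auto
    moreover have "drop m xs = drop m A @ B" "take m xs = take m A" using True assms by auto
    ultimately show ?thesis using rk
      by (intro exI[of _ "drop m A"] exI[of _ "B @ take m A"] exI[of _ m]) simp
  next
    case False
    define m' where "m' = m - length A"
    have lxs': "length xs' = length xs + 1" using assms by simp
    have "rotate (m+1) xs' = drop (m+1) xs' @ take (m+1) xs'"
      using m lxs' by (simp add: rotate_drop_take)
    moreover have "drop (m+1) xs' = drop m' B" "take (m+1) xs' = A @ e # take m' B"
      using False assms by (auto simp: m'_def Suc_diff_le)
    moreover have "drop m xs = drop m' B" "take m xs = A @ take m' B" using False assms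
      by (auto simp: m'_def)
    ultimately show ?thesis using rk
      by (intro exI[of _ "drop m' B @ A"] exI[of _ "take m' B"] exI[of _ "m+1"]) simp
  qed
qed

lemma rot1_diff:
  assumes "t \<noteq> []"
  shows "snd (cmp f (rotate 1 t)) - snd (cmp f t) = vcross (lvec (f (hd t))) (WW f t)"
proof -
  obtain x r where t: "t = [x] @ r" using assms by (cases t) auto
  have r1: "rotate 1 t = r @ [x]" using t by simp
  have "snd (cmp f (r @ [x])) - snd (cmp f ([x] @ r)) = vcross (WW f [x]) (WW f r)"
    by (rule B_swap)
  moreover have "WW f t = WW f r + of_real (fst (cmp f r)) * lvec (f x)"
    using t WW_append[of f "[x]" r] by simp
  ultimately show ?thesis using r1 t
    by (simp add: vcross_add_right vcross_scale_right)
qed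

lemma rotlast_diff:
  assumes "t \<noteq> []"
  shows "fst (f (last t)) * (snd (cmp f (rotate (length t - 1) t)) - snd (cmp f t)) = vcross (WW f t) (lvec (f (last t)))"
proof -
  obtain y r where t: "t = r @ [y]" using assms by (metis append_butlast_last_id)
  have rl: "rotate (length t - 1) t = [y] @ r" using t by (simp add: rotate_append)
  have "snd (cmp f ([y] @ r)) - snd (cmp f (r @ [y])) = vcross (WW f r) (WW f [y])"
    by (rule B_swap)
  moreover have "WW f t = lvec (f y) + of_real (fst (f y)) * WW f r"
    using t WW_append[of f r "[y]"] by simp
  ultimately show ?thesis using rl t
    by (simp add: vcross_add_left vcross_scale_left)
qed

lemma parallel_WW:
  assumes "\<And>x. x \<in> set X \<Longrightarrow> lvec (f x) = rcis (cmod (lvec (f x))) \<beta> \<and> fst (f x) > 0"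
  shows "\<exists>s. WW f X = rcis s \<beta>"
  using assms
proof (induction X rule: rev_induct)
  case Nil then show ?case by (intro exI[of _ 0]) simp
next
  case (snoc x X)
  then obtain s where s: "WW f X = rcis s \<beta>" by auto
  have "WW f (X @ [x]) = lvec (f x) + of_real (fst (f x)) * WW f X"
    using WW_append[of f X "[x]"] by simp
  also have "\<dots> = rcis (cmod (lvec (f x)) + fst (f x) * s) \<beta>"
    using snoc.prems[of x] s by (simp add: rcis_def algebra_simps)
  finally show ?case by blast
qed

lemma min_rot_exists:
  assumes "xs \<noteq> []"
  shows "\<exists>k0. \<forall>j. snd (cmp f (rotate k0 xs)) \<le> snd (cmp f (rotate j xs))"
proof -
  define n where "n = length xs"
  have n: "n > 0" using assms by (simp add: n_def)
  define S where "S = (\<lambda>k. snd (cmp f (rotate k xs))) ` {..<n}"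
  have "finite S" "S \<noteq> {}" using n by (auto simp: S_def)
  then have "Min S \<in> S" by simp
  then obtain k0 where k0: "k0 < n" "snd (cmp f (rotate k0 xs)) = Min S" by (auto simp: S_def)
  have "\<forall>j. snd (cmp f (rotate k0 xs)) \<le> snd (cmp f (rotate j xs))"
  proof
    fix j
    have "rotate j xs = rotate (j mod n) xs" by (simp add: n_def rotate_conv_mod[symmetric])
    moreover have "j mod n < n" using n by simp
    ultimately have "snd (cmp f (rotate j xs)) \<in> S" by (auto simp: S_def)
    then show "snd (cmp f (rotate k0 xs)) \<le> snd (cmp f (rotate j xs))"
      using k0 \<open>finite S\<close> by simp
  qed
  then show ?thesis by blast
qed

lemma cmp_rot_eq:
  assumes "snd (cmp f (rotate a xs)) = snd (cmp f (rotate b xs))"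
  shows "cmp f (rotate a xs) = cmp f (rotate b xs)"
proof -
  have "fst (cmp f (rotate a xs)) = fst (cmp f (rotate b xs))"
    by (rule fst_comp_perm) (simp add: mset_rotate)
  then show ?thesis using assms by (simp add: prod_eq_iff)
qed

lemma lvec_pa: "lvec (f x) = rcis (cmod (lvec (f x))) (pa f x)"
  by (simp add: pa_def rcis_polar)

lemma good_rot:
  assumes ne: "xs \<noteq> []" and props: "\<And>x. x \<in> set xs \<Longrightarrow> fst (f x) > 0 \<and> lvec (f x) \<noteq> 0"
  shows "\<exists>k. (\<forall>j. snd (cmp f (rotate k xs)) \<le> snd (cmp f (rotate j xs))) \<and>
      (WW f (rotate k xs) = 0 \<or> pa f (hd (rotate k xs)) \<noteq> polar_angle (WW f (rotate k xs))
       \<or> (\<forall>x\<in>set xs. pa f x = polar_angle (WW f (rotate k xs))))"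
proof -
  obtain k0 where k0: "\<forall>j. snd (cmp f (rotate k0 xs)) \<le> snd (cmp f (rotate j xs))"
    using min_rot_exists[OF ne] by blast
  define ys where "ys = rotate k0 xs"
  define V0 where "V0 = WW f ys"
  define \<alpha> where "\<alpha> = polar_angle V0"
  define n where "n = length xs"
  have lys: "length ys = n" by (simp add: ys_def n_def)
  have n: "n > 0" using ne by (simp add: n_def)
  show ?thesis
  proof (cases "V0 = 0 \<or> (\<forall>x\<in>set xs. pa f x = \<alpha>)")
    case True then show ?thesis using k0 by (intro exI[of _ k0]) (auto simp: V0_def ys_def \<alpha>_def)
  next
    case False
    then have V0: "V0 \<noteq> 0" and ex: "\<exists>x\<in>set xs. pa f x \<noteq> \<alpha>" by auto
    from ex obtain x where x: "x \<in> set ys" "pa f x \<noteq> \<alpha>" by (auto simp: ys_def)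
    from x(1) obtain j where j': "j < length ys" "ys ! j = x" by (auto simp: in_set_conv_nth)
    have j: "j < n \<and> pa f (ys ! j) \<noteq> \<alpha>" using j' x lys by simp
    define j0 where "j0 = (LEAST j. j < n \<and> pa f (ys ! j) \<noteq> \<alpha>)"
    have j0c: "j0 < n \<and> pa f (ys ! j0) \<noteq> \<alpha>" unfolding j0_def by (rule LeastI, rule j)
    then have j0: "j0 < n" "pa f (ys ! j0) \<noteq> \<alpha>" by auto
    have before: "\<And>i. i < j0 \<Longrightarrow> pa f (ys ! i) = \<alpha>"
    proof -
      fix i assume i: "i < j0"
      then have "\<not> (i < n \<and> pa f (ys ! i) \<noteq> \<alpha>)" unfolding j0_def by (rule not_less_Least)
      then show "pa f (ys ! i) = \<alpha>" using i j0 by auto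
    qed
    have hd_rot: "\<And>i. i < n \<Longrightarrow> hd (rotate (k0 + i) xs) = ys ! i"
    proof -
      fix i assume "i < n"
      have "rotate (k0 + i) xs = rotate i ys" by (simp add: ys_def rotate_rotate add.commute)
      moreover have "ys \<noteq> []" using lys n by auto
      ultimately show "hd (rotate (k0 + i) xs) = ys ! i" using \<open>i < n\<close> lys
        by (simp add: hd_rotate_conv_nth)
    qed
    have V0rep: "V0 = rcis (cmod V0) \<alpha>" by (simp add: \<alpha>_def rcis_polar)
    have chain: "\<And>i. i \<le> j0 \<Longrightarrow> cmp f (rotate (k0 + i) xs) = cmp f ys"
    proof -
      fix i show "i \<le> j0 \<Longrightarrow> cmp f (rotate (k0 + i) xs) = cmp f ys"
      proof (induction i)
        case 0 then show ?case by (simp add: ys_def)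
      next
        case (Suc i)
        define t where "t = rotate (k0 + i) xs"
        have tne: "t \<noteq> []" using ne by (simp add: t_def)
        have ct: "cmp f t = cmp f ys" using Suc by (simp add: t_def)
        have ht: "hd t = ys ! i" using hd_rot[of i] Suc j0 by (simp add: t_def)
        have pah: "pa f (hd t) = \<alpha>" using before[of i] Suc ht by simp
        have "vcross (lvec (f (hd t))) (WW f t) = 0"
        proof -
          have "vcross (lvec (f (hd t))) (WW f t) = vcross (rcis (cmod (lvec (f (hd t)))) \<alpha>) (rcis (cmod V0) \<alpha>)"
            using lvec_pa[of f "hd t"] pah ct V0rep by (simp add: V0_def)
          then show ?thesis by (simp add: vcross_rcis)
        qed
        then have "snd (cmp f (rotate 1 t)) = snd (cmp f t)" using rot1_diff[OF tne, of f] by simp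
        moreover have "rotate 1 t = rotate (k0 + Suc i) xs" by (simp add: t_def rotate_rotate)
        ultimately have "snd (cmp f (rotate (k0 + Suc i) xs)) = snd (cmp f (rotate (k0 + i) xs))"
          by (simp add: t_def)
        then have "cmp f (rotate (k0 + Suc i) xs) = cmp f (rotate (k0 + i) xs)" by (rule cmp_rot_eq)
        then show ?case using ct by (simp add: t_def)
      qed
    qed
    define k where "k = k0 + j0"
    have ck: "cmp f (rotate k xs) = cmp f ys" using chain[of j0] by (simp add: k_def)
    have "\<forall>j. snd (cmp f (rotate k xs)) \<le> snd (cmp f (rotate j xs))" using ck k0 by (simp add: ys_def)
    moreover have "pa f (hd (rotate k xs)) \<noteq> polar_angle (WW f (rotate k xs))"
      using hd_rot[OF j0(1)] j0(2) ck by (simp add: k_def \<alpha>_def V0_def)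
    ultimately show ?thesis by blast
  qed
qed

lemma B_ins_le:
  assumes "vcross (lvec (f e)) (WW f H) \<ge> 0"
  shows "snd (cmp f (G @ e # H)) \<le> snd (cmp f ((G @ H) @ [e]))"
proof -
  have fe: "fst (cmp f ([e] @ H)) = fst (cmp f (H @ [e]))" by (rule fst_comp_perm) simp
  have "snd (cmp f (G @ ([e] @ H))) - snd (cmp f (G @ (H @ [e]))) = snd (cmp f ([e] @ H)) - snd (cmp f (H @ [e]))"
    by (rule snd_comp_append_left[OF fe])
  moreover have "snd (cmp f (H @ [e])) - snd (cmp f ([e] @ H)) = vcross (WW f [e]) (WW f H)"
    by (rule B_swap)
  ultimately show ?thesis using assms by simp
qed

lemma ins_step:
  assumes dL: "distinct L" and cL: "cyc f L"
    and props: "\<And>x. x \<in> set L \<Longrightarrow> fst (f x) > 0 \<and> lvec (f x) \<noteq> 0"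
    and eL: "e \<in> set L" and eU: "e \<notin> U"
  shows "\<exists>k'. \<forall>k. snd (cmp f (rotate k' (filter (\<lambda>x. x \<in> insert e U) L)))
            \<le> fst (f e) * snd (cmp f (rotate k (filter (\<lambda>x. x \<in> U) L))) + snd (f e)"
proof -
  define xs where "xs = filter (\<lambda>x. x \<in> U) L"
  define xs' where "xs' = filter (\<lambda>x. x \<in> insert e U) L"
  obtain L1 L2 where L: "L = L1 @ e # L2" using eL by (metis split_list)
  have eL12: "e \<notin> set L1" "e \<notin> set L2" using dL L by auto
  have f1: "filter (\<lambda>x. x \<in> insert e U) L1 = filter (\<lambda>x. x \<in> U) L1"
    using eL12 by (intro filter_cong) auto
  have f2: "filter (\<lambda>x. x \<in> insert e U) L2 = filter (\<lambda>x. x \<in> U) L2"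
    using eL12 by (intro filter_cong) auto
  define A where "A = filter (\<lambda>x. x \<in> U) L1"
  define B where "B = filter (\<lambda>x. x \<in> U) L2"
  have xsAB: "xs = A @ B" using eU by (simp add: xs_def L A_def B_def)
  have xs'AB: "xs' = A @ e # B" using f1 f2 by (simp add: xs'_def L A_def B_def)
  have ae: "fst (f e) > 0" using props eL by auto
  have dxs': "distinct xs'" using dL by (simp add: xs'_def)
  have cxs': "cyc f xs'" using cL by (simp add: xs'_def cyc_filter)
  have pxs: "\<And>x. x \<in> set xs \<Longrightarrow> fst (f x) > 0 \<and> lvec (f x) \<noteq> 0" using props by (auto simp: xs_def)
  have pxs': "\<And>x. x \<in> set xs' \<Longrightarrow> fst (f x) > 0 \<and> lvec (f x) \<noteq> 0" using props by (auto simp: xs'_def)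
  show ?thesis
  proof (cases "xs = []")
    case True
    then have "xs' = [e]" using xsAB xs'AB by simp
    then show ?thesis using True by (intro exI[of _ 0]) (simp add: xs_def xs'_def)
  next
    case False
    obtain k1 where k1min: "\<forall>j. snd (cmp f (rotate k1 xs)) \<le> snd (cmp f (rotate j xs))"
      and k1good: "WW f (rotate k1 xs) = 0 \<or> pa f (hd (rotate k1 xs)) \<noteq> polar_angle (WW f (rotate k1 xs))
         \<or> (\<forall>x\<in>set xs. pa f x = polar_angle (WW f (rotate k1 xs)))"
      using good_rot[where f=f, OF False pxs] by blast
    define \<tau> where "\<tau> = rotate k1 xs"
    obtain G H k'' where GH: "\<tau> = G @ H" and rot'': "rotate k'' xs' = G @ e # H"
      using insert_rot[OF xsAB xs'AB, of k1] by (auto simp: \<tau>_def)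
    have goal: "\<exists>k'. snd (cmp f (rotate k' xs')) \<le> snd (cmp f (\<tau> @ [e]))"
    proof (cases "H = []")
      case True then show ?thesis using rot'' GH by (intro exI[of _ k'']) simp
    next
      case Hne: False
      show ?thesis
      proof (cases "G = []")
        case True
        have "rotate (1 + k'') xs' = rotate 1 (e # H)" using rot'' True by (simp add: rotate_rotate[symmetric])
        also have "\<dots> = H @ [e]" by simp
        finally show ?thesis using GH True by (intro exI[of _ "1 + k''"]) simp
      next
        case Gne: False
        have tne: "\<tau> \<noteq> []" using GH Gne by simp
        have hdZ: "hd (G @ e # H) = hd \<tau>" using GH Gne by simp
        have lastZ: "last (G @ e # H) = last \<tau>" using GH Hne by simp
        show ?thesis
        proof (cases "\<forall>x\<in>set xs. pa f x = polar_angle (WW f \<tau>)")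
          case True
          define \<beta> where "\<beta> = polar_angle (WW f \<tau>)"
          have setGH: "set G \<subseteq> set xs" "set H \<subseteq> set xs"
            using GH by (auto simp: \<tau>_def simp flip: set_rotate[of k1 xs])
          have parX: "lvec (f x) = rcis (cmod (lvec (f x))) \<beta> \<and> fst (f x) > 0" if "x \<in> set xs" for x
          proof -
            have "pa f x = \<beta>" using True that by (simp add: \<beta>_def)
            then show ?thesis using lvec_pa[of f x] pxs[OF that] by simp
          qed
          have parG: "\<exists>s. WW f G = rcis s \<beta>"
            by (rule parallel_WW) (use parX setGH in blast)
          have parH: "\<exists>s. WW f H = rcis s \<beta>"
            by (rule parallel_WW) (use parX setGH in blast)
          obtain sG sH where sGH: "WW f G = rcis sG \<beta>" "WW f H = rcis sH \<beta>" using parG parH by blast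
          have "snd (cmp f (H @ G)) - snd (cmp f (G @ H)) = vcross (WW f G) (WW f H)" by (rule B_swap)
          also have "\<dots> = 0" using sGH by (simp add: vcross_rcis)
          finally have eqHG: "snd (cmp f (H @ G)) = snd (cmp f (G @ H))" by simp
          have "rotate (length (G @ [e]) + k'') xs' = rotate (length (G @ [e])) ((G @ [e]) @ H)"
            using rot'' by (simp add: rotate_rotate[symmetric])
          also have "\<dots> = H @ G @ [e]" by (simp only: rotate_append)
          finally have r: "rotate (length (G @ [e]) + k'') xs' = (H @ G) @ [e]" by simp
          show ?thesis using eqHG GH
            by (intro exI[of _ "length (G @ [e]) + k''"]) (simp only: r snd_comp_snoc)
        next
          case False
          then have ang: "WW f \<tau> = 0 \<or> pa f (hd \<tau>) \<noteq> polar_angle (WW f \<tau>)" using k1good by (auto simp: \<tau>_def)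
          define Z where "Z = G @ e # H"
          have dZ: "distinct Z" using dxs' rot'' by (metis Z_def distinct_rotate)
          have cZ: "cyc f Z" using cxs' rot'' by (metis Z_def cyc_rotate)
          have pZ: "\<And>x. x \<in> set Z \<Longrightarrow> fst (f x) > 0 \<and> lvec (f x) \<noteq> 0"
            using pxs' rot'' by (metis Z_def set_rotate)
          obtain \<psi> where psi: "dirok f \<psi> Z" "sorted (map \<psi> Z)" "\<psi> (last Z) \<le> \<psi> (hd Z) + 2 * pi"
            using dirok_from_cyc[OF dZ cZ pZ] by (auto simp: Z_def)
          have c1: "vcross (lvec (f (hd \<tau>))) (WW f \<tau>) \<ge> 0"
          proof -
            have r1: "rotate 1 \<tau> = rotate (1 + k1) xs" by (simp add: \<tau>_def rotate_rotate)
            have "snd (cmp f \<tau>) \<le> snd (cmp f (rotate (1 + k1) xs))" unfolding \<tau>_def using k1min by blast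
            then have "snd (cmp f \<tau>) \<le> snd (cmp f (rotate 1 \<tau>))" by (simp only: r1)
            then show ?thesis using rot1_diff[OF tne, of f] by simp
          qed
          have c2: "vcross (WW f \<tau>) (lvec (f (last \<tau>))) \<ge> 0"
          proof -
            have r2: "rotate (length \<tau> - 1) \<tau> = rotate (length \<tau> - 1 + k1) xs" by (simp add: \<tau>_def rotate_rotate)
            have "snd (cmp f \<tau>) \<le> snd (cmp f (rotate (length \<tau> - 1 + k1) xs))" unfolding \<tau>_def using k1min by blast
            then have "snd (cmp f \<tau>) \<le> snd (cmp f (rotate (length \<tau> - 1) \<tau>))" by (simp only: r2)
            moreover have "last \<tau> \<in> set xs" using tne by (metis last_in_set set_rotate \<tau>_def)
            then have "fst (f (last \<tau>)) > 0" using pxs by blast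
            ultimately show ?thesis using rotlast_diff[OF tne, of f] by (metis diff_ge_0_iff_ge mult_nonneg_nonneg less_imp_le)
          qed
          have K: "vcross (lvec (f e)) (WW f H) \<ge> 0"
            apply (rule core_K[OF Z_def Gne Hne psi(2) psi(3) psi(1)])
            using c1 c2 ang hdZ lastZ GH by (auto simp: Z_def pa_def)
          show ?thesis using B_ins_le[OF K, of G] rot'' GH by (intro exI[of _ k'']) simp
        qed
      qed
    qed
    then obtain k' where k': "snd (cmp f (rotate k' xs')) \<le> snd (cmp f (\<tau> @ [e]))" by blast
    have "\<forall>k. snd (cmp f (rotate k' xs')) \<le> fst (f e) * snd (cmp f (rotate k xs)) + snd (f e)"
    proof
      fix k
      have "snd (cmp f (\<tau> @ [e])) = fst (f e) * snd (cmp f \<tau>) + snd (f e)" by (rule snd_comp_snoc)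
      also have "\<dots> \<le> fst (f e) * snd (cmp f (rotate k xs)) + snd (f e)"
        using k1min ae by (simp add: \<tau>_def)
      finally show "snd (cmp f (rotate k' xs')) \<le> fst (f e) * snd (cmp f (rotate k xs)) + snd (f e)"
        using k' by simp
    qed
    then show ?thesis by (auto simp: xs_def xs'_def)
  qed
qed

declare upt_Suc[simp del]

lemma potential:
  assumes dL: "distinct L" and cL: "cyc f L"
    and props: "\<And>x. x \<in> set L \<Longrightarrow> fst (f x) > 0 \<and> lvec (f x) \<noteq> 0"
  shows "distinct ys \<Longrightarrow> set ys \<subseteq> set L \<Longrightarrow>
     \<exists>k. snd (cmp f (rotate k (filter (\<lambda>x. x \<in> set ys) L))) \<le> snd (cmp f ys)"
proof (induction ys rule: rev_induct)
  case Nil then show ?case by (intro exI[of _ 0]) simp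
next
  case (snoc x ys)
  have d: "distinct ys" "x \<notin> set ys" using snoc.prems by auto
  have s: "set ys \<subseteq> set L" "x \<in> set L" using snoc.prems by auto
  obtain k where k: "snd (cmp f (rotate k (filter (\<lambda>x. x \<in> set ys) L))) \<le> snd (cmp f ys)"
    using snoc.IH d s by blast
  obtain k' where k': "\<forall>k. snd (cmp f (rotate k' (filter (\<lambda>y. y \<in> insert x (set ys)) L)))
            \<le> fst (f x) * snd (cmp f (rotate k (filter (\<lambda>y. y \<in> set ys) L))) + snd (f x)"
    using ins_step[OF dL cL props s(2) d(2)] by blast
  have ax: "fst (f x) > 0" using props s by auto
  have "snd (cmp f (rotate k' (filter (\<lambda>y. y \<in> insert x (set ys)) L)))
       \<le> fst (f x) * snd (cmp f ys) + snd (f x)"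
  proof -
    have "fst (f x) * snd (cmp f (rotate k (filter (\<lambda>y. y \<in> set ys) L))) \<le> fst (f x) * snd (cmp f ys)"
      using k ax by (simp add: mult_left_mono)
    then show ?thesis using k'[rule_format, of k] by linarith
  qed
  then show ?case by (intro exI[of _ k']) (simp add: snd_comp_snoc)
qed

lemma cp_cmp: "compose_perm f \<rho> m = cmp f (map \<rho> [1..<Suc m])"
proof (induction m)
  case 0 then show ?case by simp
next
  case (Suc m)
  have "map \<rho> [1..<Suc (Suc m)] = map \<rho> [1..<Suc m] @ [\<rho> (Suc m)]" by (simp add: upt_Suc)
  then show ?case using Suc by (simp add: comp_snoc del: upt_Suc)
qed

lemma kshift_rot:
  assumes "k \<le> n"
  shows "map (kshift n \<sigma> k) [1..<Suc n] = rotate k (map \<sigma> [1..<Suc n])"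
proof (rule nth_equalityI)
  show "length (map (kshift n \<sigma> k) [1..<Suc n]) = length (rotate k (map \<sigma> [1..<Suc n]))" by simp
next
  fix i assume "i < length (map (kshift n \<sigma> k) [1..<Suc n])"
  then have i: "i < n" by simp
  have l: "map (kshift n \<sigma> k) [1..<Suc n] ! i = kshift n \<sigma> k (Suc i)" using i by simp
  have r: "rotate k (map \<sigma> [1..<Suc n]) ! i = \<sigma> (Suc ((k + i) mod n))"
    using i by (simp add: nth_rotate)
  show "map (kshift n \<sigma> k) [1..<Suc n] ! i = rotate k (map \<sigma> [1..<Suc n]) ! i"
  proof (cases "Suc i \<le> n - k")
    case True
    then have "(k + i) mod n = k + i" using i assms by simp
    then show ?thesis using l r True by (simp add: kshift_def add.commute)
  next
    case False
    then have ge: "n \<le> k + i" using assms by linarith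
    have "(k + i) mod n = k + i - n"
    proof -
      have "(k + i) mod n = (k + i - n) mod n" using ge by (rule le_mod_geq)
      moreover have "k + i - n < n" using i assms by linarith
      ultimately show ?thesis by simp
    qed
    moreover have "Suc i + k - n = Suc (k + i - n)" using ge by linarith
    ultimately show ?thesis using l r False ge by (simp add: kshift_def)
  qed
qed

theorem mainTheorem14:
  fixes n :: nat and f :: "nat \<Rightarrow> linfun" and \<sigma> :: "nat \<Rightarrow> nat"
  assumes mono: "\<And>i. i \<in> {1..n} \<Longrightarrow> monotone_lin (f i)"
    and nonid: "\<And>i. i \<in> {1..n} \<Longrightarrow> \<not> identical_lin (f i)"
    and perm: "\<sigma> permutes {1..n}"
    and ccw: "counterclockwise n f \<sigma>"
    and le1: "lin_le (compose_perm f \<sigma> n) (compose_perm f (kshift n \<sigma> 1) n)"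
    and le2: "lin_le (compose_perm f \<sigma> n) (compose_perm f (kshift n \<sigma> (n - 1)) n)"
    and ang: "theta (f (\<sigma> 1)) \<noteq> theta (compose_perm f \<sigma> n)"
  shows "minimum_perm n f \<sigma>"
proof -
  define L where "L = map \<sigma> [1..<Suc n]"
  obtain k0 where k0: "k0 \<in> {1..n}" and k0s: "\<forall>i j. 1 \<le> i \<longrightarrow> i \<le> j \<longrightarrow> j \<le> n \<longrightarrow>
        pa f (kshift n \<sigma> (k0 - 1) i) \<le> pa f (kshift n \<sigma> (k0 - 1) j)"
    using ccw unfolding counterclockwise_def pa_def by blast
  have n1: "n \<ge> 1" using k0 by simp
  have setL: "set L = {1..n}"
    using permutes_image[OF perm] by (simp add: L_def atLeastLessThanSuc_atLeastAtMost)
  have dL: "distinct L"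
    unfolding L_def using permutes_inj_on[OF perm] by (simp add: distinct_map inj_on_subset atLeastLessThanSuc_atLeastAtMost)
  have lenL: "length L = n" by (simp add: L_def)
  have props: "\<And>x. x \<in> set L \<Longrightarrow> fst (f x) > 0 \<and> lvec (f x) \<noteq> 0"
  proof -
    fix x assume "x \<in> set L"
    then have x: "x \<in> {1..n}" using setL by simp
    have "fst (f x) > 0" using mono[OF x] by (simp add: monotone_lin_def)
    moreover have "lvec (f x) \<noteq> 0"
    proof
      assume "lvec (f x) = 0"
      then have "f x = (1, 0)" by (simp add: lvec_def complex_eq_iff prod_eq_iff)
      then show False using nonid[OF x] by (simp add: identical_lin_def)
    qed
    ultimately show "fst (f x) > 0 \<and> lvec (f x) \<noteq> 0" by simp
  qed
  have cL: "cyc f L"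
  proof -
    have r: "rotate (k0 - 1) L = map (kshift n \<sigma> (k0 - 1)) [1..<Suc n]"
    proof -
      have "k0 - 1 \<le> n" using k0 by auto
      from kshift_rot[OF this, of \<sigma>] show ?thesis by (simp add: L_def)
    qed
    have "sorted (map (pa f) (rotate (k0 - 1) L))"
      unfolding r sorted_iff_nth_mono
    proof (intro allI impI)
      fix i j assume ij: "i \<le> j" "j < length (map (pa f) (map (kshift n \<sigma> (k0 - 1)) [1..<Suc n]))"
      then have "j < n" by simp
      then show "map (pa f) (map (kshift n \<sigma> (k0 - 1)) [1..<Suc n]) ! i
          \<le> map (pa f) (map (kshift n \<sigma> (k0 - 1)) [1..<Suc n]) ! j"
        using k0s ij by simp
    qed
    then show ?thesis by (auto simp: cyc_def)
  qed
  have Lne: "L \<noteq> []" using lenL n1 by auto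
  have cpL: "compose_perm f \<sigma> n = cmp f L" by (simp add: cp_cmp L_def)
  have B1: "snd (cmp f L) \<le> snd (cmp f (rotate 1 L))"
  proof -
    have "lapp (compose_perm f \<sigma> n) 0 \<le> lapp (compose_perm f (kshift n \<sigma> 1) n) 0"
      using le1 by (simp add: lin_le_def)
    then show ?thesis using kshift_rot[of 1 n \<sigma>] n1 by (simp add: lapp_def cp_cmp L_def)
  qed
  have B2: "snd (cmp f L) \<le> snd (cmp f (rotate (length L - 1) L))"
  proof -
    have "lapp (compose_perm f \<sigma> n) 0 \<le> lapp (compose_perm f (kshift n \<sigma> (n - 1)) n) 0"
      using le2 by (simp add: lin_le_def)
    then show ?thesis using kshift_rot[of "n - 1" n \<sigma>] lenL by (simp add: lapp_def cp_cmp L_def)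
  qed
  have c1: "vcross (lvec (f (hd L))) (WW f L) \<ge> 0" using rot1_diff[OF Lne, of f] B1 by simp
  have c2: "vcross (WW f L) (lvec (f (last L))) \<ge> 0"
  proof -
    have "last L \<in> set L" using Lne by simp
    then have "fst (f (last L)) > 0" using props by blast
    then show ?thesis using rotlast_diff[OF Lne, of f] B2
      by (metis diff_ge_0_iff_ge mult_nonneg_nonneg less_imp_le)
  qed
  have hdL: "hd L = \<sigma> 1" using n1 by (simp add: L_def upt_rec)
  have angL: "WW f L = 0 \<or> polar_angle (lvec (f (hd L))) \<noteq> polar_angle (WW f L)"
  proof (cases "WW f L = 0")
    case False
    have "hd L \<in> set L" using Lne by simp
    then have "lvec (f (hd L)) \<noteq> 0" using props by blast
    then show ?thesis using ang False hdL cpL by (auto simp: theta_def)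
  qed simp
  obtain \<psi> where psi: "dirok f \<psi> L" "sorted (map \<psi> L)" "\<psi> (last L) \<le> \<psi> (hd L) + 2 * pi"
    using dirok_from_cyc[OF dL cL props] Lne by blast
  have rotB: "snd (cmp f L) \<le> snd (cmp f (rotate k L))" for k
  proof -
    define m where "m = k mod length L"
    define P where "P = take m L"
    define S where "S = drop m L"
    have LPS: "L = P @ S" by (simp add: P_def S_def)
    have rk: "rotate k L = S @ P" by (simp add: rotate_drop_take m_def P_def S_def)
    have "vcross (WW f P) (WW f S) \<ge> 0"
      by (rule core_B[OF LPS Lne psi(2) psi(3) psi(1) c1 c2 angL])
    moreover have "snd (cmp f (S @ P)) - snd (cmp f (P @ S)) = vcross (WW f P) (WW f S)" by (rule B_swap)
    ultimately show ?thesis using rk LPS by simp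
  qed
  show ?thesis
    unfolding minimum_perm_def
  proof (intro allI impI)
    fix \<rho> assume rho: "\<rho> permutes {1..n}"
    define ys where "ys = map \<rho> [1..<Suc n]"
    have sys: "set ys = set L"
      using permutes_image[OF rho] setL by (simp add: ys_def atLeastLessThanSuc_atLeastAtMost)
    have dys: "distinct ys"
      unfolding ys_def using permutes_inj_on[OF rho] by (simp add: distinct_map inj_on_subset atLeastLessThanSuc_atLeastAtMost)
    obtain k where k: "snd (cmp f (rotate k (filter (\<lambda>x. x \<in> set ys) L))) \<le> snd (cmp f ys)"
      using potential[OF dL cL props dys] sys by blast
    have "filter (\<lambda>x. x \<in> set ys) L = L" using sys by simp
    then have Ble: "snd (cmp f L) \<le> snd (cmp f ys)" using k rotB[of k] by simp
    have fe: "fst (cmp f L) = fst (cmp f ys)"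
      by (rule fst_comp_perm) (use set_eq_iff_mset_eq_distinct[OF dL dys] sys in simp)
    show "lin_le (compose_perm f \<sigma> n) (compose_perm f \<rho> n)"
      unfolding lin_le_def lapp_def cpL using Ble fe by (simp add: cp_cmp ys_def)
  qed
qed

end
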